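(* For all $x,y\in\mathbb{B}^2$, $$\tilde\tau_{\mathbb{B}^2}(x,y)\ge\begin{cases}\log\Big(1+2\sqrt{\frac{|x-y|\sqrt{|x+y|^2+|x-y|^2}}{4-|x+y|^2-|x-y|^2}}\Big), & \text{if } |x+y|\Big(1+\frac{4}{|x+y|^2+|x-y|^2}\Big)\le4,\\[2mm] \log\Big(1+\frac{2|x-y|}{\sqrt{(2-|x+y|)^2+|x-y|^2}}\Big), & \text{if } |x+y|\Big(1+\frac{4}{|x+y|^2+|x-y|^2}\Big)>4,\end{cases}$$ (for $x=y$ the left-hand side and both expressions are interpreted as $0$), and, whenever $|x+y|+|x-y|<2$, $$\tilde\tau_{\mathbb{B}^2}(x,y)\le\log\Big(1+\frac{2|x-y|}{\sqrt{(2-|x+y|)^2-|x-y|^2}}\Big).$$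
   Context: $\mathbb{B}^2$ is the open unit disk. For a proper subdomain $D\subsetneq\mathbb{R}^n$ and $x,y\in D$, $\tilde\tau_D(x,y)=\log\big(1+\sup_{p\in\partial D}\frac{|x-y|}{\sqrt{|x-p||y-p|}}\big)$ (the scale invariant Cassinian metric). *)

theory Defs
  imports "HOL-Analysis.Analysis"
begin

definition sic_metric :: "'a::euclidean_space set \<Rightarrow> 'a \<Rightarrow> 'a \<Rightarrow> real" where
  "sic_metric D x y =
     ln (1 + (SUP p\<in>frontier D. dist x y / sqrt (dist x p * dist y p)))"

end

theory Submission
  imports Defs "HOL-Complex_Analysis.Complex_Analysis"
begin


lemma key_identity:
  fixes A R :: real
  assumes r2: "r2 = A^2 + R" and pos: "r2 > 0"
    and u: "u = A * (1 + r2) / (2 * r2)" and c0: "c0 = u - A" and sv: "sv2 = 1 - u^2"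
  shows "(c0^2 - sv2 + R)^2 + 4 * c0^2 * sv2 = R * (1 - r2)^2 / r2"
proof -
  have e1: "(c0^2 - sv2 + R)^2 + 4 * c0^2 * sv2 = (c0^2 + sv2)^2 + 2*R*(2*c0^2 - (c0^2 + sv2)) + R^2"
    by (simp add: power2_eq_square algebra_simps)
  have Au: "A * u = A^2 * (1 + r2) / (2 * r2)" unfolding u by (simp add: power2_eq_square)
  have "c0^2 + sv2 = 1 + A^2 - 2 * (A * u)"
    unfolding c0 sv by (simp add: power2_eq_square algebra_simps)
  also have "\<dots> = 1 + A^2 - A^2 * (1 + r2) / r2" unfolding Au using pos by simp
  also have "\<dots> = R / r2" using pos r2 by (simp add: field_simps)
  finally have e2: "c0^2 + sv2 = R / r2" .
  have "c0 = A * (1 - r2) / (2 * r2)" unfolding c0 u using pos by (simp add: field_simps)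
  hence e3: "c0^2 = A^2 * (1 - r2)^2 / (4 * r2^2)" by (simp add: power_divide power_mult_distrib)
  have "(c0^2 - sv2 + R)^2 + 4 * c0^2 * sv2 = (R/r2)^2 + 2*R*(2*(A^2 * (1 - r2)^2 / (4 * r2^2)) - R/r2) + R^2"
    unfolding e1 unfolding e2 unfolding e3 ..
  also have "\<dots> = R * (1 - r2)^2 / r2"
    using pos apply (simp add: field_simps power2_eq_square)
    unfolding r2 by algebra
  finally show ?thesis .
qed



lemma cmod_one_minus_cnj:
  fixes x p :: complex
  assumes "cmod p = 1"
  shows "cmod (1 - cnj x * p) = cmod (p - x)"
proof -
  have pp: "p * cnj p = 1"
    using assms complex_norm_square[of p] by simp
  have "cmod (1 - cnj x * p) = cmod (cnj (1 - cnj x * p))" by (simp only: complex_mod_cnj)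
  also have "\<dots> = cmod (1 - x * cnj p)" by simp
  also have "\<dots> = cmod p * cmod (1 - x * cnj p)" using assms by simp
  also have "\<dots> = cmod (p * (1 - x * cnj p))" by (simp add: norm_mult)
  also have "p * (1 - x * cnj p) = p - x * (p * cnj p)" by (simp add: algebra_simps)
  also have "\<dots> = p - x" using pp by simp
  finally show ?thesis .
qed

lemma inv_norm_le:
  fixes a c :: complex
  assumes "cmod (inverse a) \<le> cmod (inverse c)" "a \<noteq> 0" "c \<noteq> 0"
  shows "cmod c \<le> cmod a"
  using assms by (simp add: norm_inverse)

lemma inversion_min:
  fixes x y q :: complex
  assumes x: "cmod x < 1" and y: "cmod y < 1" and q: "cmod q \<ge> 1"
  shows "\<exists>p. cmod p = 1 \<and> cmod (p - x) * cmod (p - y) \<le> cmod (q - x) * cmod (q - y) / (cmod q)^2"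
proof -
  define g where "g t = (1 - cnj x * t) * (1 - cnj y * t)" for t
  have gnz: "g t \<noteq> 0" if "cmod t \<le> 1" for t
  proof -
    have "cmod (cnj x * t) < 1" using x that
      by (simp add: norm_mult) (metis le_less_trans mult_left_le norm_ge_zero)
    hence a: "1 - cnj x * t \<noteq> 0" by auto
    have "cmod (cnj y * t) < 1" using y that
      by (simp add: norm_mult) (metis le_less_trans mult_left_le norm_ge_zero)
    hence b: "1 - cnj y * t \<noteq> 0" by auto
    show ?thesis using a b by (simp add: g_def)
  qed
  have gcirc: "cmod (g p) = cmod (p - x) * cmod (p - y)" if "cmod p = 1" for p
    using cmod_one_minus_cnj[OF that] by (simp add: g_def norm_mult)
  have cont: "continuous_on (sphere 0 1) (\<lambda>t. cmod (inverse (g t)))"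
    unfolding g_def by (intro continuous_intros) (use gnz in \<open>auto simp: g_def\<close>)
  obtain p0 where p0: "p0 \<in> sphere 0 1" and p0max: "\<And>t. t \<in> sphere 0 1 \<Longrightarrow> cmod (inverse (g t)) \<le> cmod (inverse (g p0))"
    using continuous_attains_sup[OF compact_sphere _ cont] by fastforce
  have qnz: "q \<noteq> 0" using q by auto
  define z where "z = inverse (cnj q)"
  have zn: "cmod z = 1 / cmod q" by (simp add: z_def norm_inverse divide_inverse)
  have zle: "cmod z \<le> 1" using q zn by (simp add: divide_le_eq)
  have gz: "cmod (g z) = cmod (q - x) * cmod (q - y) / (cmod q)^2"
  proof -
    have e: "1 - cnj w * z = (cnj q - cnj w) / cnj q" for w
      using qnz by (simp add: z_def field_simps)
    have "cmod (1 - cnj w * z) = cmod (q - w) / cmod q" for w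
    proof -
      have "cmod (1 - cnj w * z) = cmod (cnj q - cnj w) / cmod (cnj q)" by (simp add: e norm_divide)
      also have "cnj q - cnj w = cnj (q - w)" by simp
      finally show ?thesis by (simp only: complex_mod_cnj)
    qed
    thus ?thesis by (simp add: g_def norm_mult power2_eq_square)
  qed
  have "cmod (g p0) \<le> cmod (g z)"
  proof (cases "cmod z < 1")
    case True
    have "cmod (inverse (g z)) \<le> cmod (inverse (g p0))"
    proof (rule maximum_modulus_frontier[where f = "\<lambda>t. inverse (g t)" and S = "ball 0 1"])
      show "(\<lambda>t. inverse (g t)) holomorphic_on interior (ball 0 1)"
        unfolding g_def by (intro holomorphic_intros) (use gnz in \<open>auto simp: g_def\<close>)
      show "continuous_on (closure (ball 0 1)) (\<lambda>t. inverse (g t))"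
        unfolding g_def by (intro continuous_intros) (use gnz in \<open>auto simp: g_def\<close>)
      show "bounded (ball (0::complex) 1)" by simp
      show "cmod (inverse (g t)) \<le> cmod (inverse (g p0))" if "t \<in> frontier (ball 0 1)" for t
        using p0max that by simp
      show "z \<in> ball 0 1" using True by simp
    qed
    moreover have "g z \<noteq> 0" "g p0 \<noteq> 0" using gnz zle p0 by auto
    ultimately show ?thesis by (rule inv_norm_le)
  next
    case False
    hence "cmod z = 1" using zle by simp
    hence "z \<in> sphere 0 1" by simp
    hence "cmod (inverse (g z)) \<le> cmod (inverse (g p0))" using p0max by blast
    moreover have "g z \<noteq> 0" "g p0 \<noteq> 0" using gnz zle p0 by auto
    ultimately show ?thesis by (rule inv_norm_le)
  qed
  moreover have "cmod p0 = 1" using p0 by simp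
  ultimately show ?thesis using gcirc gz by metis
qed



lemma case_pos_ineq:
  fixes b1 b2 g d :: real
  assumes "g \<ge> 0" "d * (2*b1*b2) \<ge> 0"
  shows "(g - (b1^2 - b2^2))^2 + (d - 2*b1*b2)^2 \<le> (g + (b1^2 + b2^2))^2 + d^2"
proof -
  have "(g + (b1^2 + b2^2))^2 + d^2 - ((g - (b1^2 - b2^2))^2 + (d - 2*b1*b2)^2)
        = 2*g*(2*b1^2) + 2*(d*(2*b1*b2))"
    by (simp add: power2_eq_square algebra_simps)
  moreover have "2*g*(2*b1^2) \<ge> 0" using assms by simp
  ultimately show ?thesis using assms by linarith
qed

lemma Complex_sq: "(Complex a c)^2 = Complex (a^2 - c^2) (2*a*c)"
  by (simp add: power2_eq_square complex_eq_iff)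

lemma of_real_plus_Complex: "complex_of_real r + Complex a c = Complex (r + a) c"
  by (simp add: complex_eq_iff)

lemma Complex_plus_of_real: "Complex a c + complex_of_real r = Complex (a + r) c"
  by (simp add: complex_eq_iff)

lemma Complex_minus_Complex: "Complex a c - Complex e f = Complex (a - e) (c - f)"
  by (simp add: complex_eq_iff)

lemma cmod_Complex_sq: "(cmod (Complex a c))^2 = a^2 + c^2"
  by (simp add: cmod_power2)

lemma prod_eq:
  fixes p c b :: complex
  shows "cmod (p - (c + b)) * cmod (p - (c - b)) = cmod ((p - c)^2 - b^2)"
proof -
  have "(p - (c + b)) * (p - (c - b)) = (p - c)^2 - b^2" by (simp add: power2_eq_square algebra_simps)
  thus ?thesis by (metis norm_mult)
qed

lemma hard_norm:
  fixes A :: real and b :: complex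
  assumes A0: "A \<ge> 0" and bnz: "b \<noteq> 0"
    and hx: "cmod (complex_of_real A + b) < 1" and hy: "cmod (complex_of_real A - b) < 1"
    and cond: "A * (1 + (A^2 + (cmod b)^2)) \<le> 2 * (A^2 + (cmod b)^2)"
  shows "\<exists>p. cmod p = 1 \<and> cmod (p - (complex_of_real A + b)) * cmod (p - (complex_of_real A - b))
            \<le> cmod b * (1 - (A^2 + (cmod b)^2)) / sqrt (A^2 + (cmod b)^2)"
proof -
  obtain b1 b2 where b: "b = Complex b1 b2" by (metis complex.exhaust)
  define R where "R = (cmod b)^2"
  define r2 where "r2 = A^2 + R"
  define B where "B = cmod b"
  have R: "R = b1^2 + b2^2" unfolding R_def b by (simp add: cmod_power2)
  have Bpos: "B > 0" using bnz by (simp add: B_def)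
  have RB: "R = B^2" by (simp add: R_def B_def)
  have Rpos: "R > 0" using Bpos RB by simp
  have r2pos: "r2 > 0" using Rpos by (simp add: r2_def add_nonneg_pos)
  have r2lt: "r2 < 1"
  proof -
    have "(cmod (complex_of_real A + b))^2 = (A + b1)^2 + b2^2" by (simp add: b cmod_power2)
    moreover have "(cmod (complex_of_real A - b))^2 = (A - b1)^2 + b2^2" by (simp add: b cmod_power2)
    moreover have "(cmod (complex_of_real A + b))^2 < 1" using hx by (simp add: power_less_one_iff abs_less_iff)
    moreover have "(cmod (complex_of_real A - b))^2 < 1" using hy by (simp add: power_less_one_iff abs_less_iff)
    ultimately have "(A + b1)^2 + b2^2 + ((A - b1)^2 + b2^2) < 2" by linarith
    moreover have "(A + b1)^2 + b2^2 + ((A - b1)^2 + b2^2) = 2 * r2"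
      by (simp add: r2_def R power2_eq_square algebra_simps)
    ultimately show ?thesis by linarith
  qed
  define u where "u = A * (1 + r2) / (2 * r2)"
  define c0 where "c0 = u - A"
  define sv where "sv = sqrt (1 - u^2)"
  define m0 where "m0 = B * (1 - r2) / sqrt r2"
  have u0: "u \<ge> 0" using A0 r2pos by (simp add: u_def)
  have u1: "u \<le> 1" using cond r2pos by (simp add: u_def r2_def R_def)
  have c0eq: "c0 = A * (1 - r2) / (2 * r2)" unfolding c0_def u_def using r2pos by (simp add: field_simps)
  have c00: "c0 \<ge> 0" unfolding c0eq using A0 r2pos r2lt by simp
  have u2: "u^2 \<le> 1" using power_le_one[OF u0 u1, of 2] by simp
  have sv0: "sv \<ge> 0" using u2 by (simp add: sv_def)
  have sv2: "sv^2 = 1 - u^2" unfolding sv_def using u2 by simp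
  have m00: "m0 \<ge> 0" unfolding m0_def using Bpos r2pos r2lt by simp
  have m0sq: "m0^2 = R * (1 - r2)^2 / r2"
    unfolding m0_def using r2pos by (simp add: power_divide power_mult_distrib RB)
  have keyid: "(c0^2 - sv^2 + R)^2 + 4 * c0^2 * sv^2 = R * (1 - r2)^2 / r2"
    by (rule key_identity[OF r2_def[unfolded R_def] r2pos u_def c0_def sv2, folded R_def])
  have wval: "cmod ((Complex c0 (s * sv))^2 + complex_of_real R) = m0" if s: "s^2 = 1" for s
  proof -
    have "(cmod ((Complex c0 (s * sv))^2 + complex_of_real R))^2 = (c0^2 - sv^2 + R)^2 + 4 * c0^2 * sv^2"
      unfolding Complex_sq Complex_plus_of_real cmod_Complex_sq
      using s by (simp add: power_mult_distrib)
    also have "\<dots> = m0^2" using keyid m0sq by simp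
    finally show ?thesis using m00 by (simp add: power2_eq_iff_nonneg)
  qed
  have won: "cmod (complex_of_real A + Complex c0 (s * sv)) = 1" if s: "s^2 = 1" for s
  proof -
    have "(cmod (complex_of_real A + Complex c0 (s * sv)))^2 = u^2 + sv^2"
      unfolding of_real_plus_Complex cmod_Complex_sq
      using s by (simp add: c0_def power_mult_distrib)
    also have "\<dots> = 1" using sv2 by simp
    finally show ?thesis by (smt (verit) power2_eq_1_iff norm_ge_zero)
  qed
  show ?thesis
  proof (cases "c0^2 - sv^2 \<ge> 0")
    case True
    define s where "s = (if 2*b1*b2 \<ge> 0 then 1 else (-1::real))"
    have s2: "s^2 = 1" by (simp add: s_def)
    define w where "w = Complex c0 (s * sv)"
    define p where "p = complex_of_real A + w"
    have "cmod (p - (complex_of_real A + b)) * cmod (p - (complex_of_real A - b)) = cmod (w^2 - b^2)"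
      unfolding prod_eq p_def by simp
    also have "\<dots> \<le> cmod (w^2 + complex_of_real R)"
    proof -
      have "(cmod (w^2 - b^2))^2 = (c0^2 - sv^2 - (b1^2 - b2^2))^2 + (2 * c0 * s * sv - 2*b1*b2)^2"
        unfolding w_def b Complex_sq Complex_minus_Complex cmod_Complex_sq
        using s2 by (simp add: power_mult_distrib mult.assoc)
      also have "\<dots> \<le> (c0^2 - sv^2 + (b1^2 + b2^2))^2 + (2 * c0 * s * sv)^2"
      proof (rule case_pos_ineq[OF True])
        have "s * (2*b1*b2) \<ge> 0" by (simp add: s_def)
        thus "2 * c0 * s * sv * (2*b1*b2) \<ge> 0" using c00 sv0
          by (metis mult.assoc mult.commute mult_nonneg_nonneg zero_le_numeral)
      qed
      also have "\<dots> = (cmod (w^2 + complex_of_real R))^2"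
        unfolding w_def R Complex_sq Complex_plus_of_real cmod_Complex_sq
        using s2 by (simp add: power_mult_distrib mult.assoc)
      finally show ?thesis by (simp add: power2_le_iff_abs_le)
    qed
    also have "\<dots> = m0" unfolding w_def by (rule wval[OF s2])
    finally have "cmod (p - (complex_of_real A + b)) * cmod (p - (complex_of_real A - b)) \<le> m0" .
    moreover have "cmod p = 1" unfolding p_def w_def by (rule won[OF s2])
    ultimately show ?thesis unfolding m0_def B_def R_def r2_def by blast
  next
    case False
    have c0sv: "c0 \<le> sv"
    proof (rule ccontr)
      assume "\<not> c0 \<le> sv"
      hence "sv < c0" by simp
      hence "sv^2 \<le> c0^2" using sv0 by (simp add: power_mono)
      thus False using False by simp
    qed
    define e where "e = (if b2 \<le> 0 then 1 else (-1::real))"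
    define s where "s = (if e * b1 \<le> 0 then 1 else (-1::real))"
    have e2: "e^2 = 1" by (simp add: e_def)
    have s2: "s^2 = 1" by (simp add: s_def)
    have h1: "e*(-b2) = \<bar>b2\<bar>" by (simp add: e_def)
    have h2: "-(e * s * b1) = \<bar>b1\<bar>" by (auto simp: e_def s_def)
    define w where "w = Complex c0 (s * sv)"
    define rho where "rho = Complex (-e*b2/B) (e*b1/B)"
    define z where "z = rho * w"
    define q where "q = complex_of_real A + z"
    have Bsq: "B^2 = b1^2 + b2^2" using R RB by simp
    have Ble: "B \<le> \<bar>b1\<bar> + \<bar>b2\<bar>"
    proof (rule power2_le_imp_le)
      show "B^2 \<le> (\<bar>b1\<bar> + \<bar>b2\<bar>)^2" unfolding Bsq
        by (simp add: power2_eq_square algebra_simps abs_mult_self_eq)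
    qed simp
    have Rez: "Re z * B = \<bar>b2\<bar> * c0 + \<bar>b1\<bar> * sv"
    proof -
      have "Re z = (-e*b2/B)*c0 - (e*b1/B)*(s * sv)" by (simp add: z_def rho_def w_def)
      hence "Re z * B = (e*(-b2))*c0 + (-(e * s * b1))* sv" using Bpos by (simp add: field_simps)
      thus ?thesis unfolding h1 h2 .
    qed
    have Rez_ge: "Re z \<ge> c0"
    proof -
      have "\<bar>b2\<bar> * c0 + \<bar>b1\<bar> * sv \<ge> \<bar>b2\<bar> * c0 + \<bar>b1\<bar> * c0"
        using c0sv by (simp add: mult_left_mono)
      moreover have "(\<bar>b2\<bar> + \<bar>b1\<bar>) * c0 \<ge> B * c0" using Ble c00 by (simp add: mult_right_mono)
      ultimately have "Re z * B \<ge> c0 * B" using Rez by (simp add: algebra_simps)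
      thus ?thesis using Bpos by simp
    qed
    have rho_norm: "(cmod rho)^2 = 1"
    proof -
      have nz: "b1^2 + b2^2 \<noteq> 0" using Bpos Bsq by (metis power_not_zero less_irrefl)
      show ?thesis
        unfolding rho_def cmod_Complex_sq using e2 Bsq nz
        by (simp add: power_divide power_mult_distrib flip: add_divide_distrib)
    qed
    have zn: "(cmod z)^2 = c0^2 + sv^2"
      unfolding z_def norm_mult power_mult_distrib rho_norm w_def cmod_Complex_sq
      using s2 by (simp add: power_mult_distrib)
    have qn: "(cmod q)^2 = A^2 + 2 * A * Re z + (cmod z)^2"
      by (simp add: q_def cmod_power2) (simp add: power2_eq_square algebra_simps)
    have q1: "cmod q \<ge> 1"
    proof -
      have "A * Re z \<ge> A * c0" using Rez_ge A0 by (simp add: mult_left_mono)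
      hence "(cmod q)^2 \<ge> (A + c0)^2 + sv^2" unfolding qn zn by (simp add: power2_eq_square algebra_simps)
      moreover have "(A + c0)^2 + sv^2 = 1" using sv2 by (simp add: c0_def)
      ultimately have "(cmod q)^2 \<ge> 1" by simp
      thus ?thesis by (smt (verit) norm_ge_zero power2_le_imp_le one_power2)
    qed
    have rho2: "rho^2 * complex_of_real R = - (b^2)"
    proof -
      have r: "rho = complex_of_real (e/B) * Complex (-b2) b1"
        by (simp add: rho_def complex_eq_iff)
      have c: "(e/B)^2 * R = 1" using e2 RB Bpos by (simp add: power_divide)
      have "rho^2 * complex_of_real R = (complex_of_real (e/B))^2 * complex_of_real R * (Complex (-b2) b1)^2"
        unfolding r power_mult_distrib by (simp only: mult_ac)
      also have "\<dots> = complex_of_real ((e/B)^2 * R) * (Complex (-b2) b1)^2"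
        by (simp only: of_real_mult of_real_power)
      also have "\<dots> = (Complex (-b2) b1)^2" unfolding c by simp
      also have "\<dots> = - (b^2)" unfolding b Complex_sq by (simp add: complex_eq_iff)
      finally show ?thesis .
    qed
    have "z^2 - b^2 = rho^2 * (w^2 + complex_of_real R)"
      unfolding z_def using rho2 by (simp add: power_mult_distrib algebra_simps)
    hence zb: "cmod (z^2 - b^2) = m0"
      using wval[OF s2] rho_norm by (simp add: norm_mult w_def norm_power)
    have prodq: "cmod (q - (complex_of_real A + b)) * cmod (q - (complex_of_real A - b)) = m0"
      unfolding prod_eq q_def using zb by simp
    have hxA: "cmod (complex_of_real A + b) < 1" by (rule hx)
    obtain p where p1: "cmod p = 1" and
      pl: "cmod (p - (complex_of_real A + b)) * cmod (p - (complex_of_real A - b)) \<le> m0 / (cmod q)^2"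
      using inversion_min[OF hx hy q1] prodq by auto
    have "m0 / (cmod q)^2 \<le> m0"
    proof -
      have "(cmod q)^2 \<ge> 1" using q1 by (simp add: one_le_power)
      thus ?thesis using m00 by (simp add: divide_le_eq mult_le_cancel_left1 mult_left_le)
    qed
    with p1 pl show ?thesis unfolding m0_def B_def R_def r2_def by (meson order.trans)
  qed
qed



lemma hard_complex:
  fixes x y :: complex
  assumes x: "cmod x < 1" and y: "cmod y < 1" and xy: "x \<noteq> y"
    and cond: "cmod (x + y) * (1 + 4 / ((cmod (x + y))^2 + (cmod (x - y))^2)) \<le> 4"
  shows "\<exists>p. cmod p = 1 \<and> cmod (p - x) * cmod (p - y)
          \<le> cmod (x - y) * (4 - (cmod (x + y))^2 - (cmod (x - y))^2) / (4 * sqrt ((cmod (x + y))^2 + (cmod (x - y))^2))"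
proof -
  define a where "a = (x + y) / 2"
  define A where "A = cmod a"
  define om where "om = (if a = 0 then 1 else a / complex_of_real A)"
  have omn: "cmod om = 1" by (simp add: om_def A_def norm_divide)
  have omnz: "om \<noteq> 0" using omn by auto
  have aA: "a = om * complex_of_real A"
    by (cases "a = 0") (auto simp: om_def A_def)
  define b where "b = (x - y) / 2 / om"
  have xe: "x = om * (complex_of_real A + b)"
    using omnz by (simp add: b_def distrib_left flip: aA) (simp add: a_def field_simps)
  have ye: "y = om * (complex_of_real A - b)"
    using omnz by (simp add: b_def right_diff_distrib flip: aA) (simp add: a_def field_simps)
  have hx: "cmod (complex_of_real A + b) < 1" using x unfolding xe by (simp add: norm_mult omn)
  have hy: "cmod (complex_of_real A - b) < 1" using y unfolding ye by (simp add: norm_mult omn)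
  have bnz: "b \<noteq> 0" using xy xe ye by auto
  define s where "s = cmod (x + y)"
  define d where "d = cmod (x - y)"
  have As: "A = s / 2" by (simp add: A_def a_def s_def norm_divide)
  have Bd: "cmod b = d / 2" by (simp add: b_def d_def norm_divide omn)
  define T where "T = s^2 + d^2"
  have dpos: "d > 0" using xy by (simp add: d_def)
  have Tpos: "T > 0" using dpos by (simp add: T_def add_nonneg_pos)
  have r2T: "A^2 + (cmod b)^2 = T / 4" by (simp add: As Bd T_def power_divide)
  have cond': "A * (1 + (A^2 + (cmod b)^2)) \<le> 2 * (A^2 + (cmod b)^2)"
  proof -
    have "s * (1 + 4 / T) \<le> 4" using cond by (simp add: s_def d_def T_def)
    hence h1: "s * (1 + 4 / T) * (T / 8) \<le> 4 * (T / 8)" using Tpos by (simp add: mult_right_mono)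
    have h2: "s * (1 + 4 / T) * (T / 8) = A * (1 + T/4)" using Tpos by (simp add: As field_simps)
    show ?thesis unfolding r2T using h1 h2 by linarith
  qed
  have A0: "A \<ge> 0" by (simp add: A_def)
  obtain p' where p'1: "cmod p' = 1" and
    p'le: "cmod (p' - (complex_of_real A + b)) * cmod (p' - (complex_of_real A - b))
            \<le> cmod b * (1 - (A^2 + (cmod b)^2)) / sqrt (A^2 + (cmod b)^2)"
    using hard_norm[OF A0 bnz hx hy cond'] by blast
  define p where "p = om * p'"
  have p1: "cmod p = 1" by (simp add: p_def norm_mult omn p'1)
  have "cmod (p - x) * cmod (p - y) = cmod (p' - (complex_of_real A + b)) * cmod (p' - (complex_of_real A - b))"
    unfolding p_def xe ye by (simp add: norm_mult omn flip: right_diff_distrib)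
  also have "\<dots> \<le> cmod b * (1 - (A^2 + (cmod b)^2)) / sqrt (A^2 + (cmod b)^2)" by (rule p'le)
  also have "\<dots> = d * (4 - s^2 - d^2) / (4 * sqrt T)"
  proof -
    have q: "sqrt (T/4) = sqrt T / 2" by (simp add: real_sqrt_divide)
    have st: "sqrt T > 0" using Tpos by simp
    have eq1: "4 - s^2 - d^2 = 4 - T" by (simp add: T_def)
    have B: "d / 2 * (1 - T / 4) / (sqrt T / 2) = d * (4 - T) / (4 * sqrt T)"
      using st by (simp add: field_simps)
    have A: "cmod b * (1 - (A^2 + (cmod b)^2)) / sqrt (A^2 + (cmod b)^2) = d / 2 * (1 - T / 4) / (sqrt T / 2)"
      unfolding r2T unfolding q unfolding Bd by (rule refl)
    show ?thesis unfolding eq1 by (rule trans[OF A B])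
  qed
  finally show ?thesis using p1 unfolding s_def d_def T_def by blast
qed

lemma easy_witness:
  fixes x y :: complex
  assumes x: "cmod x < 1" and y: "cmod y < 1"
  shows "\<exists>p. cmod p = 1 \<and> cmod (p - x) * cmod (p - y) \<le> ((2 - cmod (x + y))^2 + (cmod (x - y))^2) / 4"
proof -
  define a where "a = (x + y) / 2"
  define b where "b = (x - y) / 2"
  define A where "A = cmod a"
  define p where "p = (if a = 0 then 1 else a / complex_of_real A)"
  have p1: "cmod p = 1" by (simp add: p_def A_def norm_divide)
  have A1: "A < 1"
  proof -
    have "cmod (x + y) \<le> cmod x + cmod y" by (rule norm_triangle_ineq)
    thus ?thesis using x y by (simp add: A_def a_def norm_divide)
  qed
  have pa: "cmod (p - a) = 1 - A"
  proof (cases "a = 0")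
    case True thus ?thesis by (simp add: p_def A_def)
  next
    case False
    hence Apos: "A > 0" by (simp add: A_def)
    have "p - a = complex_of_real (1/A - 1) * a" using Apos False by (simp add: p_def field_simps)
    hence "cmod (p - a) = \<bar>1/A - 1\<bar> * A" by (simp only: norm_mult norm_of_real A_def)
    also have "\<dots> = 1 - A" using Apos A1 by (simp add: field_simps)
    finally show ?thesis .
  qed
  have "cmod (p - x) * cmod (p - y) = cmod ((p - a)^2 - b^2)"
    using prod_eq[of p a b] by (simp add: a_def b_def field_simps)
  also have "\<dots> \<le> cmod ((p - a)^2) + cmod (b^2)" by (rule norm_triangle_ineq4)
  also have "\<dots> = (1 - A)^2 + (cmod b)^2" by (simp add: norm_power pa)
  also have "\<dots> = ((2 - cmod (x + y))^2 + (cmod (x - y))^2) / 4"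
    by (simp add: A_def a_def b_def norm_divide power_divide field_simps)
  finally show ?thesis using p1 by blast
qed

lemma prod_lower:
  fixes x y p :: complex
  assumes x: "cmod x < 1" and y: "cmod y < 1" and p: "cmod p = 1"
  shows "cmod (p - x) * cmod (p - y) \<ge> ((2 - cmod (x + y))^2 - (cmod (x - y))^2) / 4"
proof -
  define a where "a = (x + y) / 2"
  define b where "b = (x - y) / 2"
  define A where "A = cmod a"
  have A1: "A < 1"
  proof -
    have "cmod (x + y) \<le> cmod x + cmod y" by (rule norm_triangle_ineq)
    thus ?thesis using x y by (simp add: A_def a_def norm_divide)
  qed
  have pa: "cmod (p - a) \<ge> 1 - A"
    using norm_triangle_ineq2[of p a] p by (simp add: A_def)
  have pa2: "(cmod (p - a))^2 \<ge> (1 - A)^2" using pa A1 by (simp add: power_mono)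
  have "((2 - cmod (x + y))^2 - (cmod (x - y))^2) / 4 = (1 - A)^2 - (cmod b)^2"
    by (simp add: A_def a_def b_def norm_divide power_divide field_simps)
  also have "\<dots> \<le> cmod ((p - a)^2) - cmod (b^2)" using pa2 by (simp add: norm_power)
  also have "\<dots> \<le> cmod ((p - a)^2 - b^2)" by (rule norm_triangle_ineq2)
  also have "\<dots> = cmod (p - x) * cmod (p - y)"
    using prod_eq[of p a b] by (simp add: a_def b_def field_simps)
  finally show ?thesis .
qed



definition c2 :: "real^2 \<Rightarrow> complex" where "c2 v = Complex (v$1) (v$2)"
definition v2 :: "complex \<Rightarrow> real^2" where "v2 z = vector [Re z, Im z]"

lemma norm_c2: "cmod (c2 v) = norm v"
  by (simp add: c2_def norm_vec_def L2_set_def sum_2 cmod_def)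

lemma c2_v2: "c2 (v2 z) = z"
  by (simp add: c2_def v2_def complex_eq_iff)

lemma norm_v2: "norm (v2 z) = cmod z"
  by (metis c2_v2 norm_c2)

lemma c2_add: "c2 (x + y) = c2 x + c2 y" by (simp add: c2_def complex_eq_iff)
lemma c2_diff: "c2 (x - y) = c2 x - c2 y" by (simp add: c2_def complex_eq_iff)

lemma dist_c2: "dist x y = cmod (c2 x - c2 y)"
  by (simp add: dist_norm norm_c2 flip: c2_diff)

lemma parallelogram_c:
  fixes X Y :: complex
  shows "(cmod (X + Y))^2 + (cmod (X - Y))^2 = 2 * ((cmod X)^2 + (cmod Y)^2)"
  unfolding cmod_power2 by (simp add: power2_eq_square algebra_simps)

lemma L1:
  fixes P d Q T :: real
  assumes "0 < P" "P \<le> d * Q / (4 * sqrt T)" "d > 0" "Q > 0" "T > 0"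
  shows "2 * sqrt (d * sqrt T / Q) \<le> d / sqrt P"
proof -
  have st: "sqrt T > 0" using assms by simp
  have "4 * sqrt T * P \<le> d * Q" using assms(2) st by (simp add: field_simps)
  hence "4 * (d * sqrt T / Q) \<le> d^2 / P"
    using assms st by (simp add: field_simps power2_eq_square)
  hence "sqrt (4 * (d * sqrt T / Q)) \<le> sqrt (d^2 / P)" by (rule real_sqrt_le_mono)
  moreover have "sqrt (4 * (d * sqrt T / Q)) = 2 * sqrt (d * sqrt T / Q)"
    by (simp only: real_sqrt_mult real_sqrt_four)
  moreover have "sqrt (d^2 / P) = d / sqrt P" using assms by (simp add: real_sqrt_divide)
  ultimately show ?thesis by simp
qed

lemma L2:
  fixes P d V :: real
  assumes "0 < P" "P \<le> V / 4" "d \<ge> 0"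
  shows "2 * d / sqrt V \<le> d / sqrt P"
proof -
  have "sqrt P \<le> sqrt (V/4)" using assms by simp
  also have "sqrt (V/4) = sqrt V / 2" by (simp add: real_sqrt_divide)
  finally have "sqrt P \<le> sqrt V / 2" .
  moreover have "sqrt P > 0" using assms by simp
  ultimately have "d / (sqrt V / 2) \<le> d / sqrt P"
    using assms by (intro divide_left_mono) auto
  thus ?thesis by (simp add: divide_divide_eq_right mult.commute)
qed

lemma L3:
  fixes P d W :: real
  assumes "P \<ge> W / 4" "W > 0" "d \<ge> 0"
  shows "d / sqrt P \<le> 2 * d / sqrt W"
proof -
  have "sqrt (W/4) \<le> sqrt P" using assms by simp
  moreover have "sqrt (W/4) = sqrt W / 2" by (simp add: real_sqrt_divide)
  ultimately have "sqrt W / 2 \<le> sqrt P" by simp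
  moreover have "sqrt W / 2 > 0" using assms by simp
  ultimately have "d / sqrt P \<le> d / (sqrt W / 2)"
    using assms by (intro divide_left_mono) auto
  thus ?thesis by (simp add: divide_divide_eq_right mult.commute)
qed

theorem theorem3p6:
  fixes x y :: "real^2"
  assumes "x \<in> ball 0 1" and "y \<in> ball 0 1"
  shows "sic_metric (ball 0 1) x y \<ge>
           (if x = y then 0
            else if norm (x + y) * (1 + 4 / ((norm (x + y))\<^sup>2 + (norm (x - y))\<^sup>2)) \<le> 4
            then ln (1 + 2 * sqrt (norm (x - y) * sqrt ((norm (x + y))\<^sup>2 + (norm (x - y))\<^sup>2)
                                    / (4 - (norm (x + y))\<^sup>2 - (norm (x - y))\<^sup>2)))
            else ln (1 + 2 * norm (x - y) / sqrt ((2 - norm (x + y))\<^sup>2 + (norm (x - y))\<^sup>2)))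
         \<and> (norm (x + y) + norm (x - y) < 2 \<longrightarrow>
           sic_metric (ball 0 1) x y \<le>
           ln (1 + 2 * norm (x - y) / sqrt ((2 - norm (x + y))\<^sup>2 - (norm (x - y))\<^sup>2)))"
proof -
  define S where "S = sphere (0::real^2) 1"
  define F where "F p = dist x y / sqrt (dist x p * dist y p)" for p
  define X where "X = c2 x"
  define Y where "Y = c2 y"
  have nx: "norm x < 1" using assms by simp
  have ny: "norm y < 1" using assms by simp
  have X1: "cmod X < 1" using nx by (simp add: X_def norm_c2)
  have Y1: "cmod Y < 1" using ny by (simp add: Y_def norm_c2)
  define s where "s = norm (x + y)"
  define d where "d = norm (x - y)"
  have sX: "s = cmod (X + Y)" by (simp add: s_def X_def Y_def norm_c2 flip: c2_add)
  have dX: "d = cmod (X - Y)" by (simp add: d_def X_def Y_def norm_c2 flip: c2_diff)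
  have d0: "d \<ge> 0" by (simp add: d_def)
  have dxy: "dist x y = d" by (simp add: d_def dist_norm)
  have sic: "sic_metric (ball 0 1) x y = ln (1 + (SUP p\<in>S. F p))"
    by (simp add: sic_metric_def S_def F_def)
  have Sne: "S \<noteq> {}"
  proof -
    have "v2 1 \<in> S" by (simp add: S_def norm_v2)
    thus ?thesis by blast
  qed
  have distpos: "dist z p \<ge> 1 - norm z" if "p \<in> S" for z p
  proof -
    have "norm p = 1" using that by (simp add: S_def)
    moreover have "norm p - norm z \<le> norm (z - p)" using norm_triangle_ineq2[of p z]
      by (simp add: norm_minus_commute)
    ultimately show ?thesis by (simp add: dist_norm)
  qed
  have prodpos: "dist x p * dist y p \<ge> (1 - norm x) * (1 - norm y)" if "p \<in> S" for p
    using distpos[OF that, of x] distpos[OF that, of y] nx ny by (simp add: mult_mono)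
  have prodpos': "dist x p * dist y p > 0" if "p \<in> S" for p
    using prodpos[OF that] nx ny by (meson less_le_trans mult_pos_pos diff_gt_0_iff_gt)
  have Fnn: "F p \<ge> 0" for p by (simp add: F_def)
  have bdd: "bdd_above (F ` S)"
  proof (rule bdd_aboveI2)
    fix p assume p: "p \<in> S"
    have "sqrt ((1 - norm x) * (1 - norm y)) \<le> sqrt (dist x p * dist y p)"
      using prodpos[OF p] by simp
    moreover have "sqrt ((1 - norm x) * (1 - norm y)) > 0" using nx ny by simp
    ultimately show "F p \<le> dist x y / sqrt ((1 - norm x) * (1 - norm y))"
      unfolding F_def by (simp add: divide_left_mono)
  qed
  have lower: "ln (1 + F p) \<le> sic_metric (ball 0 1) x y" if "p \<in> S" for p
  proof -
    have "F p \<le> (SUP p\<in>S. F p)" using cSUP_upper[OF that bdd] .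
    moreover have "1 + F p > 0" using Fnn[of p] by simp
    ultimately show ?thesis unfolding sic by simp
  qed
  have witness: "\<exists>p\<in>S. ln (1 + d / sqrt P) \<le> sic_metric (ball 0 1) x y \<and> P > 0"
    if q: "cmod q = 1" "cmod (q - X) * cmod (q - Y) = P" for q P
  proof -
    define p where "p = v2 q"
    have pS: "p \<in> S" by (simp add: p_def S_def norm_v2 q)
    have "dist x p * dist y p = P"
      unfolding dist_c2 p_def c2_v2 using q by (simp add: X_def Y_def norm_minus_commute)
    hence "F p = d / sqrt P" by (simp add: F_def dxy)
    thus ?thesis using lower[OF pS] pS prodpos'[OF pS] \<open>dist x p * dist y p = P\<close> by auto
  qed
  have mono1: "ln (1 + a) \<le> ln (1 + c)" if "0 \<le> a" "a \<le> c" for a c :: real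
    using that by simp
  have part1: "sic_metric (ball 0 1) x y \<ge>
           (if x = y then 0
            else if s * (1 + 4 / (s\<^sup>2 + d\<^sup>2)) \<le> 4
            then ln (1 + 2 * sqrt (d * sqrt (s\<^sup>2 + d\<^sup>2) / (4 - s\<^sup>2 - d\<^sup>2)))
            else ln (1 + 2 * d / sqrt ((2 - s)\<^sup>2 + d\<^sup>2)))"
  proof (cases "x = y")
    case True
    obtain p where "p \<in> S" using Sne by blast
    hence "ln (1 + F p) \<le> sic_metric (ball 0 1) x y" by (rule lower)
    moreover have "ln (1 + F p) \<ge> 0" using Fnn[of p] by simp
    ultimately show ?thesis using True by simp
  next
    case xy: False
    have dpos: "d > 0" using xy by (simp add: d_def)
    show ?thesis
    proof (cases "s * (1 + 4 / (s\<^sup>2 + d\<^sup>2)) \<le> 4")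
      case True
      have XY: "X \<noteq> Y" using dpos dX by auto
      obtain q where q1: "cmod q = 1" and
        ql: "cmod (q - X) * cmod (q - Y) \<le> d * (4 - s^2 - d^2) / (4 * sqrt (s^2 + d^2))"
        using hard_complex[OF X1 Y1 XY] True unfolding sX dX by blast
      obtain p where "p \<in> S" and lp: "ln (1 + d / sqrt (cmod (q - X) * cmod (q - Y))) \<le> sic_metric (ball 0 1) x y"
        and Pp: "cmod (q - X) * cmod (q - Y) > 0"
        using witness[OF q1 refl] by blast
      have Q: "4 - s^2 - d^2 > 0"
      proof -
        have "(cmod X)^2 < 1" using X1 by (simp add: power_less_one_iff abs_less_iff)
        moreover have "(cmod Y)^2 < 1" using Y1 by (simp add: power_less_one_iff abs_less_iff)
        ultimately show ?thesis using parallelogram_c[of X Y] unfolding sX[symmetric] dX[symmetric] by simp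
      qed
      have T: "s^2 + d^2 > 0" using dpos by (simp add: add_nonneg_pos)
      have "2 * sqrt (d * sqrt (s\<^sup>2 + d\<^sup>2) / (4 - s\<^sup>2 - d\<^sup>2)) \<le> d / sqrt (cmod (q - X) * cmod (q - Y))"
        by (rule L1[OF Pp ql dpos Q T])
      hence "ln (1 + 2 * sqrt (d * sqrt (s\<^sup>2 + d\<^sup>2) / (4 - s\<^sup>2 - d\<^sup>2))) \<le> ln (1 + d / sqrt (cmod (q - X) * cmod (q - Y)))"
        using d0 Q by (intro mono1) auto
      hence "ln (1 + 2 * sqrt (d * sqrt (s\<^sup>2 + d\<^sup>2) / (4 - s\<^sup>2 - d\<^sup>2))) \<le> sic_metric (ball 0 1) x y"
        using lp by linarith
      thus ?thesis using True xy by simp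
    next
      case False
      obtain q where q1: "cmod q = 1" and
        ql: "cmod (q - X) * cmod (q - Y) \<le> ((2 - s)^2 + d^2) / 4"
        using easy_witness[OF X1 Y1] unfolding sX dX by blast
      obtain p where "p \<in> S" and lp: "ln (1 + d / sqrt (cmod (q - X) * cmod (q - Y))) \<le> sic_metric (ball 0 1) x y"
        and Pp: "cmod (q - X) * cmod (q - Y) > 0"
        using witness[OF q1 refl] by blast
      have "2 * d / sqrt ((2 - s)^2 + d^2) \<le> d / sqrt (cmod (q - X) * cmod (q - Y))"
        by (rule L2[OF Pp ql d0])
      hence "ln (1 + 2 * d / sqrt ((2 - s)^2 + d^2)) \<le> ln (1 + d / sqrt (cmod (q - X) * cmod (q - Y)))"
        using d0 by (intro mono1) auto
      hence "ln (1 + 2 * d / sqrt ((2 - s)^2 + d^2)) \<le> sic_metric (ball 0 1) x y"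
        using lp by linarith
      thus ?thesis using False xy by simp
    qed
  qed
  have part2: "sic_metric (ball 0 1) x y \<le> ln (1 + 2 * d / sqrt ((2 - s)\<^sup>2 - d\<^sup>2))"
    if sd: "s + d < 2"
  proof -
    have W: "(2 - s)^2 - d^2 > 0"
    proof -
      have "d < 2 - s" using sd by simp
      hence "d^2 < (2 - s)^2" using d0 by (simp add: power_strict_mono)
      thus ?thesis by simp
    qed
    have Fle: "F p \<le> 2 * d / sqrt ((2 - s)\<^sup>2 - d\<^sup>2)" if p: "p \<in> S" for p
    proof -
      have cp: "cmod (c2 p) = 1" using p by (simp add: S_def norm_c2)
      have "dist x p * dist y p = cmod (c2 p - X) * cmod (c2 p - Y)"
        by (simp add: dist_c2 X_def Y_def norm_minus_commute)
      also have "\<dots> \<ge> ((2 - s)^2 - d^2) / 4"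
        using prod_lower[OF X1 Y1 cp] unfolding sX dX .
      finally have "dist x p * dist y p \<ge> ((2 - s)^2 - d^2) / 4" .
      thus ?thesis unfolding F_def dxy by (rule L3[OF _ W d0])
    qed
    have "(SUP p\<in>S. F p) \<le> 2 * d / sqrt ((2 - s)\<^sup>2 - d\<^sup>2)"
      using cSUP_least[OF Sne] Fle by blast
    moreover have "0 \<le> (SUP p\<in>S. F p)"
    proof -
      obtain p where p: "p \<in> S" using Sne by blast
      show ?thesis using cSUP_upper[OF p bdd] Fnn[of p] by linarith
    qed
    ultimately show ?thesis unfolding sic by simp
  qed
  show ?thesis using part1 part2 unfolding s_def d_def by blast
qed

end
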